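(* For all $e,f\in\mathsf{Exp}/{\sim}$ and $v_x\in V$, $\mathsf{bd}(\mu v_x.e,\mu v_x.f)\le\mathsf{bd}(e,f)$.
   Context: Fix variables $V=\{v_1,v_2,\dots\}$ and letters $\Sigma$. Expressions: $e\in\mathsf{Exp}::=0\mid v\ (v\in V)\mid a.e\mid e+f\mid\mu v.e$ ($\mu v$ binds $v$); substitution is capture-avoiding. The prechart $(\mathsf{Exp},\partial)$: least relations with $a.e\xrightarrow{a}e$; $v\rhd v$; $e+f$ has all transitions and outputs of $e$ and of $f$; $\mu w.e\rhd v$ if $e\rhd v$, $v\ne w$; $\mu v.e\xrightarrow{a}e'[\mu v.e/v]$ if $e\xrightarrow{a}e'$. Bisimilarity $\sim$ is a congruence; $\mathsf{Exp}/{\sim}$ is a prechart via $[e]\xrightarrow{a}[e']$ iff $e\xrightarrow{a}e'$, $[e]\rhd v$ iff $e\rhd v$, with $\beta([e])=\{(a,[e'])\mid e\xrightarrow{a}e'\}\cup\{v\mid e\rhd v\}$. A 1-bounded pseudometric on $X$ is $d:X\times X\to[0,1]$ with $d(x,x)=0$, symmetry, triangle inequality, ordered pointwise. $d^\uparrow$ on $\Sigma\times X+V$: $d^\uparrow((a,x),(a,y))=\tfrac12 d(x,y)$, $0$ if equal, $1$ otherwise. $\mathcal H(d)(A,B)=\max\{\sup_{x\in A}\inf_{y\in B}d(x,y),\sup_{y\in B}\inf_{x\in A}d(y,x)\}$, $\sup\emptyset=0$, $\inf\emptyset=1$. $\mathsf{bd}$ is the least fixpoint of $d\mapsto\big((x,y)\mapsto\mathcal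 H(d^\uparrow)(\beta(x),\beta(y))\big)$ on pseudometrics on $\mathsf{Exp}/{\sim}$. *)

theory Defs
  imports Complex_Main
begin

text \<open>Variables V = nat (v_1, v_2, ...); letters Sigma = type variable 'a.\<close>

datatype 'a exp = Zero | Var nat | Act 'a "'a exp" | Plus "'a exp" "'a exp" | Mu nat "'a exp"

fun fv :: "'a exp \<Rightarrow> nat set" where
  "fv Zero = {}"
| "fv (Var u) = {u}"
| "fv (Act a e) = fv e"
| "fv (Plus e f) = fv e \<union> fv f"
| "fv (Mu w e) = fv e - {w}"

fun vars :: "'a exp \<Rightarrow> nat set" where
  "vars Zero = {}"
| "vars (Var u) = {u}"
| "vars (Act a e) = vars e"
| "vars (Plus e f) = vars e \<union> vars f"
| "vars (Mu w e) = insert w (vars e)"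

text \<open>Renaming of free occurrences of w by z (used only with z fresh, hence no capture).\<close>
fun rn :: "nat \<Rightarrow> nat \<Rightarrow> 'a exp \<Rightarrow> 'a exp" where
  "rn w z Zero = Zero"
| "rn w z (Var u) = Var (if u = w then z else u)"
| "rn w z (Act a e) = Act a (rn w z e)"
| "rn w z (Plus e f) = Plus (rn w z e) (rn w z f)"
| "rn w z (Mu u e) = (if u = w then Mu u e else Mu u (rn w z e))"

lemma size_rn [simp]: "size (rn w z e) = size e"
  by (induction e) auto

definition fresh :: "nat set \<Rightarrow> nat" where
  "fresh S = Suc (Max S)"

text \<open>Capture-avoiding substitution: subst e g v = e[g/v].\<close>
function subst :: "'a exp \<Rightarrow> 'a exp \<Rightarrow> nat \<Rightarrow> 'a exp" where
  "subst Zero g v = Zero"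
| "subst (Var u) g v = (if u = v then g else Var u)"
| "subst (Act a e) g v = Act a (subst e g v)"
| "subst (Plus e f) g v = Plus (subst e g v) (subst f g v)"
| "subst (Mu w e) g v =
     (if w = v then Mu w e
      else if w \<notin> fv g then Mu w (subst e g v)
      else Mu (fresh (vars e \<union> fv g \<union> {v, w}))
              (subst (rn w (fresh (vars e \<union> fv g \<union> {v, w})) e) g v))"
  by pat_completeness auto
termination by (relation "measure (\<lambda>(e, g, v). size e)") auto

inductive step :: "'a exp \<Rightarrow> 'a \<Rightarrow> 'a exp \<Rightarrow> bool" where
  "step (Act a e) a e"
| "step e a e' \<Longrightarrow> step (Plus e f) a e'"
| "step f a f' \<Longrightarrow> step (Plus e f) a f'"
| "step e a e' \<Longrightarrow> step (Mu v e) a (subst e' (Mu v e) v)"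

inductive out :: "'a exp \<Rightarrow> nat \<Rightarrow> bool" where
  "out (Var v) v"
| "out e v \<Longrightarrow> out (Plus e f) v"
| "out f v \<Longrightarrow> out (Plus e f) v"
| "out e v \<Longrightarrow> v \<noteq> w \<Longrightarrow> out (Mu w e) v"

definition bisimulation :: "('a exp \<Rightarrow> 'a exp \<Rightarrow> bool) \<Rightarrow> bool" where
  "bisimulation R \<longleftrightarrow> (\<forall>x y. R x y \<longrightarrow>
      (\<forall>a x'. step x a x' \<longrightarrow> (\<exists>y'. step y a y' \<and> R x' y')) \<and>
      (\<forall>a y'. step y a y' \<longrightarrow> (\<exists>x'. step x a x' \<and> R x' y')) \<and>
      (\<forall>v. out x v \<longleftrightarrow> out y v))"

definition bisim :: "'a exp \<Rightarrow> 'a exp \<Rightarrow> bool" where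
  "bisim x y \<longleftrightarrow> (\<exists>R. bisimulation R \<and> R x y)"

lemma equivp_bisim: "equivp bisim"
proof (rule equivpI)
  show "reflp bisim"
    unfolding reflp_def bisim_def
    by (intro allI exI[of _ "(=)"]) (auto simp: bisimulation_def)
  show "symp bisim"
    unfolding symp_def bisim_def
  proof (intro allI impI)
    fix x y assume "\<exists>R. bisimulation R \<and> R x y"
    then obtain R where R: "bisimulation R" "R x y" by blast
    have "bisimulation (\<lambda>a b. R b a)"
      using R(1) unfolding bisimulation_def by blast
    then show "\<exists>R. bisimulation R \<and> R y x" using R(2) by blast
  qed
  show "transp bisim"
    unfolding transp_def bisim_def
  proof (intro allI impI)
    fix x y z assume "\<exists>R. bisimulation R \<and> R x y" "\<exists>R. bisimulation R \<and> R y z"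
    then obtain R S where R: "bisimulation R" "R x y" and S: "bisimulation S" "S y z" by blast
    have "bisimulation (R OO S)"
      unfolding bisimulation_def
    proof (rule allI, rule allI, rule impI)
      fix u w assume "(R OO S) u w"
      then obtain m where "R u m" "S m w" by blast
      note r = R(1)[unfolded bisimulation_def, rule_format, OF \<open>R u m\<close>]
      note s = S(1)[unfolded bisimulation_def, rule_format, OF \<open>S m w\<close>]
      show "(\<forall>a x'. step u a x' \<longrightarrow> (\<exists>y'. step w a y' \<and> (R OO S) x' y')) \<and>
            (\<forall>a y'. step w a y' \<longrightarrow> (\<exists>x'. step u a x' \<and> (R OO S) x' y')) \<and>
            (\<forall>v. out u v \<longleftrightarrow> out w v)"
        using r s by (meson relcomppI)
    qed
    then show "\<exists>R. bisimulation R \<and> R x z" using R(2) S(2) by blast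
  qed
qed

quotient_type 'a qexp = "'a exp" / bisim
  by (rule equivp_bisim)

definition beta :: "'a qexp \<Rightarrow> ('a \<times> 'a qexp + nat) set" where
  "beta C = {Inl (a, abs_qexp e') | a e'. step (rep_qexp C) a e'}
          \<union> {Inr v | v. out (rep_qexp C) v}"

definition pseudometric :: "('x \<Rightarrow> 'x \<Rightarrow> real) \<Rightarrow> bool" where
  "pseudometric d \<longleftrightarrow> (\<forall>x y. 0 \<le> d x y \<and> d x y \<le> 1) \<and> (\<forall>x. d x x = 0) \<and>
     (\<forall>x y. d x y = d y x) \<and> (\<forall>x y z. d x z \<le> d x y + d y z)"

fun dup :: "('x \<Rightarrow> 'x \<Rightarrow> real) \<Rightarrow> ('a \<times> 'x + nat) \<Rightarrow> ('a \<times> 'x + nat) \<Rightarrow> real" where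
  "dup d (Inl (a, x)) (Inl (b, y)) = (if a = b then d x y / 2 else 1)"
| "dup d (Inr v) (Inr w) = (if v = w then 0 else 1)"
| "dup d _ _ = 1"

definition supz :: "real set \<Rightarrow> real" where
  "supz S = (if S = {} then 0 else Sup S)"

definition infz :: "real set \<Rightarrow> real" where
  "infz S = (if S = {} then 1 else Inf S)"

definition hausdorff :: "('y \<Rightarrow> 'y \<Rightarrow> real) \<Rightarrow> 'y set \<Rightarrow> 'y set \<Rightarrow> real" where
  "hausdorff d A B = max (supz ((\<lambda>x. infz ((\<lambda>y. d x y) ` B)) ` A))
                         (supz ((\<lambda>y. infz ((\<lambda>x. d y x) ` A)) ` B))"

definition Phi :: "('a qexp \<Rightarrow> 'a qexp \<Rightarrow> real) \<Rightarrow> 'a qexp \<Rightarrow> 'a qexp \<Rightarrow> real" where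
  "Phi d x y = hausdorff (dup d) (beta x) (beta y)"

definition bd :: "'a qexp \<Rightarrow> 'a qexp \<Rightarrow> real" where
  "bd = (THE d. pseudometric d \<and> Phi d = d \<and>
                (\<forall>d'. pseudometric d' \<and> Phi d' = d' \<longrightarrow> d \<le> d'))"

end

theory Submission
  imports Defs
begin


datatype 'a dexp = DZ | DF nat | DB nat | DA 'a "'a dexp" | DP "'a dexp" "'a dexp" | DM "'a dexp"

fun idx :: "nat list \<Rightarrow> nat \<Rightarrow> nat option" where
  "idx [] u = None"
| "idx (x#xs) u = (if x = u then Some 0 else map_option Suc (idx xs u))"

fun db :: "'a exp \<Rightarrow> nat list \<Rightarrow> 'a dexp" where
  "db Zero G = DZ"
| "db (Var u) G = (case idx G u of None \<Rightarrow> DF u | Some i \<Rightarrow> DB i)"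
| "db (Act a e) G = DA a (db e G)"
| "db (Plus e f) G = DP (db e G) (db f G)"
| "db (Mu w e) G = DM (db e (w#G))"

fun dfv :: "'a dexp \<Rightarrow> nat set" where
  "dfv DZ = {}" | "dfv (DF u) = {u}" | "dfv (DB i) = {}" | "dfv (DA a T) = dfv T"
| "dfv (DP S T) = dfv S \<union> dfv T" | "dfv (DM T) = dfv T"

fun dout :: "'a dexp \<Rightarrow> nat set" where
  "dout DZ = {}" | "dout (DF u) = {u}" | "dout (DB i) = {}" | "dout (DA a T) = {}"
| "dout (DP S T) = dout S \<union> dout T" | "dout (DM T) = dout T"

fun dsub :: "'a dexp \<Rightarrow> 'a dexp \<Rightarrow> nat \<Rightarrow> 'a dexp" where
  "dsub DZ K v = DZ" | "dsub (DF u) K v = (if u = v then K else DF u)" | "dsub (DB i) K v = DB i"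
| "dsub (DA a T) K v = DA a (dsub T K v)" | "dsub (DP S T) K v = DP (dsub S K v) (dsub T K v)"
| "dsub (DM T) K v = DM (dsub T K v)"

fun opn :: "nat \<Rightarrow> nat \<Rightarrow> 'a dexp \<Rightarrow> 'a dexp" where
  "opn n x DZ = DZ" | "opn n x (DF u) = DF u" | "opn n x (DB i) = (if i = n then DF x else DB i)"
| "opn n x (DA a T) = DA a (opn n x T)" | "opn n x (DP S T) = DP (opn n x S) (opn n x T)"
| "opn n x (DM T) = DM (opn (Suc n) x T)"

fun dcl :: "nat \<Rightarrow> 'a dexp \<Rightarrow> bool" where
  "dcl n DZ = True" | "dcl n (DF u) = True" | "dcl n (DB i) = (i < n)"
| "dcl n (DA a T) = dcl n T" | "dcl n (DP S T) = (dcl n S \<and> dcl n T)"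
| "dcl n (DM T) = dcl (Suc n) T"

definition sw :: "nat \<Rightarrow> nat \<Rightarrow> nat \<Rightarrow> nat" where
  "sw x y u = (if u = x then y else if u = y then x else u)"

fun swp :: "nat \<Rightarrow> nat \<Rightarrow> 'a dexp \<Rightarrow> 'a dexp" where
  "swp x y DZ = DZ" | "swp x y (DF u) = DF (sw x y u)" | "swp x y (DB i) = DB i"
| "swp x y (DA a T) = DA a (swp x y T)" | "swp x y (DP S T) = DP (swp x y S) (swp x y T)"
| "swp x y (DM T) = DM (swp x y T)"

inductive dstep :: "'a dexp \<Rightarrow> 'a \<Rightarrow> 'a dexp \<Rightarrow> bool" where
  dA: "dstep (DA a T) a T"
| dP1: "dstep S a S' \<Longrightarrow> dstep (DP S T) a S'"
| dP2: "dstep T a T' \<Longrightarrow> dstep (DP S T) a T'"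
| dM: "dstep (opn 0 x E) a T \<Longrightarrow> x \<notin> dfv E \<Longrightarrow> dstep (DM E) a (dsub T (DM E) x)"

lemma finite_dfv[simp]: "finite (dfv T)" by (induction T) auto
lemma size_opn[simp]: "size (opn n x T) = size T" by (induction T arbitrary: n) auto

lemma dcl_mono: "dcl n T \<Longrightarrow> n \<le> m \<Longrightarrow> dcl m T"
  by (induction T arbitrary: n m) auto
lemma opn_dcl: "dcl n T \<Longrightarrow> n \<le> m \<Longrightarrow> opn m x T = T"
  by (induction T arbitrary: n m) auto
lemma opn_dsub: "dcl 0 K \<Longrightarrow> x \<noteq> v \<Longrightarrow> opn n x (dsub E K v) = dsub (opn n x E) K v"
  by (induction E arbitrary: n) (auto simp: opn_dcl)
lemma dfv_opn: "dfv (opn n x E) \<subseteq> dfv E \<union> {x}"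
  by (induction E arbitrary: n) auto
lemma dout_opn1: "dout (opn n x E) \<subseteq> dout E \<union> {x}"
  by (induction E arbitrary: n) auto
lemma dout_opn2: "dout E \<subseteq> dout (opn n x E)"
  by (induction E arbitrary: n) auto
lemmas dout_opn = dout_opn1 dout_opn2
lemma dfv_dsub: "dfv (dsub T M x) \<subseteq> (dfv T - {x}) \<union> dfv M"
  by (induction T) auto
lemma dsub_nofree: "x \<notin> dfv T \<Longrightarrow> dsub T M x = T"
  by (induction T) auto
lemma dsub_comm: "y \<noteq> v \<Longrightarrow> y \<notin> dfv K \<Longrightarrow>
   dsub (dsub T M y) K v = dsub (dsub T K v) (dsub M K v) y"
  by (induction T) (auto simp: dsub_nofree)
lemma dcl_dsub: "dcl n T \<Longrightarrow> dcl 0 M \<Longrightarrow> dcl n (dsub T M x)"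
  by (induction T arbitrary: n) (auto intro: dcl_mono)
lemma dcl_opn: "dcl (Suc n) T \<Longrightarrow> dcl n (opn n x T)"
  by (induction T arbitrary: n) auto

lemma sw_inj: "sw x y a = sw x y b \<longleftrightarrow> a = b" by (auto simp: sw_def)
lemma swp_opn: "swp x y (opn n z T) = opn n (sw x y z) (swp x y T)"
  by (induction T arbitrary: n) auto
lemma swp_dsub: "swp x y (dsub T M z) = dsub (swp x y T) (swp x y M) (sw x y z)"
  by (induction T) (auto simp: sw_inj)
lemma dfv_swp: "dfv (swp x y T) = sw x y ` dfv T"
  by (induction T) auto
lemma swp_id: "x \<notin> dfv T \<Longrightarrow> y \<notin> dfv T \<Longrightarrow> swp x y T = T"
  by (induction T) (auto simp: sw_def)
lemma dsub_swp: "y \<notin> dfv T \<Longrightarrow> dsub (swp x y T) M y = dsub T M x"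
  by (induction T) (auto simp: sw_def)

lemma dstep_swp: "dstep T a T' \<Longrightarrow> dstep (swp x y T) a (swp x y T')"
proof (induction rule: dstep.induct)
  case (dM z E a T)
  have "dstep (opn 0 (sw x y z) (swp x y E)) a (swp x y T)" using dM.IH by (simp add: swp_opn)
  moreover have "sw x y z \<notin> dfv (swp x y E)" using dM.hyps(2) by (auto simp: dfv_swp sw_inj)
  ultimately have "dstep (DM (swp x y E)) a (dsub (swp x y T) (DM (swp x y E)) (sw x y z))"
    by (rule dstep.dM)
  then show ?case by (simp add: swp_dsub)
qed (auto intro: dstep.intros)

lemma dstep_dfv: "dstep T a T' \<Longrightarrow> dfv T' \<subseteq> dfv T"
proof (induction rule: dstep.induct)
  case (dM x E a T)
  then show ?case using dfv_dsub[of T "DM E" x] dfv_opn[of 0 x E] by auto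
qed auto

lemma dstep_dcl: "dstep T a T' \<Longrightarrow> dcl 0 T \<Longrightarrow> dcl 0 T'"
proof (induction rule: dstep.induct)
  case (dM x E a T)
  then show ?case by (auto intro!: dcl_dsub dcl_opn)
qed auto

lemma fresh_nat: "finite (S::nat set) \<Longrightarrow> \<exists>y. y \<notin> S"
  using infinite_UNIV_nat by (metis UNIV_I finite_subset subsetI)

lemma MuInv:
  assumes "dstep (DM E) a T" "finite S"
  shows "\<exists>y T'. y \<notin> S \<and> y \<notin> dfv E \<and> dstep (opn 0 y E) a T' \<and> T = dsub T' (DM E) y"
proof -
  from assms(1) obtain x T0 where x: "dstep (opn 0 x E) a T0" "x \<notin> dfv E" "T = dsub T0 (DM E) x"
    by (cases rule: dstep.cases) auto
  obtain y where y: "y \<notin> S \<union> dfv E \<union> dfv T0 \<union> {x}" using fresh_nat[of "S \<union> dfv E \<union> dfv T0 \<union> {x}"] assms(2) by auto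
  have "dstep (swp x y (opn 0 x E)) a (swp x y T0)" using x(1) by (rule dstep_swp)
  moreover have "swp x y (opn 0 x E) = opn 0 y E" using x(2) y by (simp add: swp_opn swp_id sw_def)
  ultimately have "dstep (opn 0 y E) a (swp x y T0)" by simp
  moreover have "T = dsub (swp x y T0) (DM E) y" using x(3) y by (simp add: dsub_swp)
  ultimately show ?thesis using y x(2) by blast
qed

lemma DS2: "dstep G a G' \<Longrightarrow> dcl 0 K \<Longrightarrow> dstep (dsub G K v) a (dsub G' K v)"
proof (induction G arbitrary: G' rule: measure_induct_rule[of size])
  case (less G)
  from less.prems(1) show ?case
  proof (cases rule: dstep.cases)
    case dA then show ?thesis by (auto intro: dstep.intros)
  next
    case (dP1 S T) then show ?thesis using less by (auto intro: dstep.intros)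
  next
    case (dP2 T S) then show ?thesis using less by (auto intro: dstep.intros)
  next
    case (dM x E T)
    obtain y T' where y: "y \<notin> {v} \<union> dfv K" "y \<notin> dfv E" "dstep (opn 0 y E) a T'" "G' = dsub T' (DM E) y"
      using MuInv[of E a G' "{v} \<union> dfv K"] less.prems dM by auto
    have "dstep (dsub (opn 0 y E) K v) a (dsub T' K v)"
      using less.IH[of "opn 0 y E"] dM y less.prems by auto
    then have "dstep (opn 0 y (dsub E K v)) a (dsub T' K v)" using y less.prems by (simp add: opn_dsub)
    moreover have "y \<notin> dfv (dsub E K v)" using y dfv_dsub[of E K v] by auto
    ultimately have "dstep (DM (dsub E K v)) a (dsub (dsub T' K v) (DM (dsub E K v)) y)"
      by (rule dstep.dM)
    moreover have "dsub G' K v = dsub (dsub T' K v) (DM (dsub E K v)) y" using y(1,4) by (simp add: dsub_comm)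
    ultimately show ?thesis using dM(1) by simp
  qed
qed

lemma DS1: "dstep (dsub G K v) a T \<Longrightarrow> dcl 0 K \<Longrightarrow>
   (\<exists>G'. dstep G a G' \<and> T = dsub G' K v) \<or> (v \<in> dout G \<and> dstep K a T)"
proof (induction G arbitrary: T rule: measure_induct_rule[of size])
  case (less G)
  show ?case
  proof (cases G)
    case DZ then show ?thesis using less.prems by (auto elim: dstep.cases)
  next
    case (DF u) then show ?thesis using less.prems by (auto elim: dstep.cases split: if_splits)
  next
    case (DB i) then show ?thesis using less.prems by (auto elim: dstep.cases)
  next
    case (DA b T0) then show ?thesis using less.prems by (auto elim: dstep.cases intro: dstep.intros)
  next
    case (DP S1 S2)
    from less.prems(1) DP have "dstep (DP (dsub S1 K v) (dsub S2 K v)) a T" by simp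
    then show ?thesis
    proof (cases rule: dstep.cases)
      case dP1 then show ?thesis using less.IH[of S1 T] DP less.prems by (auto intro: dstep.intros)
    next
      case dP2 then show ?thesis using less.IH[of S2 T] DP less.prems by (auto intro: dstep.intros)
    qed
  next
    case (DM E)
    from less.prems(1) DM have "dstep (DM (dsub E K v)) a T" by simp
    then obtain y T' where y: "y \<notin> {v} \<union> dfv K \<union> dfv E" "y \<notin> dfv (dsub E K v)"
      "dstep (opn 0 y (dsub E K v)) a T'" "T = dsub T' (DM (dsub E K v)) y"
      using MuInv[of "dsub E K v" a T "{v} \<union> dfv K \<union> dfv E"] by auto
    have st: "dstep (dsub (opn 0 y E) K v) a T'" using y less.prems by (simp add: opn_dsub)
    from less.IH[of "opn 0 y E" T', OF _ st less.prems(2)] DM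
    have "(\<exists>G'. dstep (opn 0 y E) a G' \<and> T' = dsub G' K v) \<or> (v \<in> dout (opn 0 y E) \<and> dstep K a T')"
      by simp
    then show ?thesis
    proof
      assume "\<exists>G'. dstep (opn 0 y E) a G' \<and> T' = dsub G' K v"
      then obtain G'' where G'': "dstep (opn 0 y E) a G''" "T' = dsub G'' K v" by blast
      have "dstep (DM E) a (dsub G'' (DM E) y)" using G'' y by (auto intro: dstep.dM)
      moreover have "T = dsub (dsub G'' (DM E) y) K v" using y G'' by (simp add: dsub_comm)
      ultimately show ?thesis using DM by blast
    next
      assume a: "v \<in> dout (opn 0 y E) \<and> dstep K a T'"
      then have "v \<in> dout E" using dout_opn(1)[of 0 y E] y by auto
      moreover have "y \<notin> dfv T'" using y a dstep_dfv[of K a T'] by auto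
      then have "T = T'" using y by (simp add: dsub_nofree)
      ultimately show ?thesis using DM a by auto
    qed
  qed
qed

lemma DS3: "v \<in> dout G \<Longrightarrow> dstep K a T \<Longrightarrow> dcl 0 K \<Longrightarrow> dstep (dsub G K v) a T"
proof (induction G rule: measure_induct_rule[of size])
  case (less G)
  show ?case
  proof (cases G)
    case (DP S1 S2) then show ?thesis using less by (auto intro: dstep.intros)
  next
    case (DM E)
    obtain y where y: "y \<notin> {v} \<union> dfv K \<union> dfv E" using fresh_nat[of "{v} \<union> dfv K \<union> dfv E"] by auto
    have "v \<in> dout (opn 0 y E)" using less.prems DM dout_opn(2)[of E 0 y] by auto
    then have "dstep (dsub (opn 0 y E) K v) a T" using less DM by auto
    then have "dstep (opn 0 y (dsub E K v)) a T" using y less.prems by (simp add: opn_dsub)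
    moreover have "y \<notin> dfv (dsub E K v)" using y dfv_dsub[of E K v] by auto
    ultimately have "dstep (DM (dsub E K v)) a (dsub T (DM (dsub E K v)) y)" by (rule dstep.dM)
    moreover have "y \<notin> dfv T" using y dstep_dfv[OF less.prems(2)] by auto
    then have "dsub T (DM (dsub E K v)) y = T" by (simp add: dsub_nofree)
    ultimately show ?thesis using DM by simp
  qed (use less.prems in auto)
qed

lemma DO: "dout (dsub G K v) = (dout G - {v}) \<union> (if v \<in> dout G then dout K else {})"
  by (induction G) auto


lemma fv_vars: "fv e \<subseteq> vars e" by (induction e) auto
lemma finite_vars[simp]: "finite (vars e)" by (induction e) auto
lemma finite_fv[simp]: "finite (fv e)" by (rule finite_subset[OF fv_vars]) simp
lemma fresh_gt: "finite S \<Longrightarrow> x \<in> S \<Longrightarrow> x < fresh S"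
  unfolding fresh_def using Max_ge by (simp add: le_imp_less_Suc)

lemma idx_None: "idx G u = None \<longleftrightarrow> u \<notin> set G" by (induction G) auto
lemma idx_Some_lt: "idx G u = Some i \<Longrightarrow> i < length G" by (induction G arbitrary: i) (auto split: if_splits)
lemma idx_Some_in: "idx G u = Some i \<Longrightarrow> u \<in> set G" by (metis idx_None option.distinct(1))

lemma dfv_db: "dfv (db e G) = {u \<in> fv e. idx G u = None}"
  by (induction e arbitrary: G) (auto split: option.splits)
lemma dcl_db: "dcl (length G) (db e G)"
proof (induction e arbitrary: G)
  case (Mu w e) then show ?case using Mu.IH[of "w#G"] by simp
qed (auto split: option.splits dest: idx_Some_lt)

lemma db_agree: "(\<forall>u\<in>fv e. idx G u = idx D u) \<Longrightarrow> db e G = db e D"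
proof (induction e arbitrary: G D)
  case (Act a e)
  then show ?case using Act.IH[of G D] by simp
next
  case (Plus e f)
  then show ?case using Plus.IH(1)[of G D] Plus.IH(2)[of G D] by simp
next
  case (Mu w e)
  have "\<forall>u\<in>fv e. idx (w#G) u = idx (w#D) u" using Mu.prems by auto
  from Mu.IH[OF this] show ?case by simp
qed simp_all

lemma db_rn: "z \<notin> vars e \<Longrightarrow> idx G' z = idx G w \<Longrightarrow> idx G w \<noteq> None \<Longrightarrow>
   (\<forall>u\<in>fv e. u \<noteq> w \<longrightarrow> idx G' u = idx G u) \<Longrightarrow> db (rn w z e) G' = db e G"
proof (induction e arbitrary: G G')
  case (Var u)
  show ?case
  proof (cases "u = w")
    case True then show ?thesis using Var.prems(2,3) by (auto split: option.splits)
  next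
    case False
    then have "idx G' u = idx G u" using Var.prems(4) by simp
    then show ?thesis using False by simp
  qed
next
  case (Mu u e)
  show ?case
  proof (cases "u = w")
    case True
    have "\<forall>x\<in>fv (Mu w e). idx G' x = idx G x" using Mu.prems(4) by (simp add: True)
    then have "db (Mu w e) G' = db (Mu w e) G" by (rule db_agree)
    then show ?thesis using True by simp
  next
    case False
    have zu: "z \<noteq> u" using Mu.prems(1) by auto
    have h1: "z \<notin> vars e" using Mu.prems(1) by simp
    have h2: "idx (u#G') z = idx (u#G) w" using Mu.prems(2) zu False by simp
    have h3: "idx (u#G) w \<noteq> None" using Mu.prems(3) False by simp
    have h4: "\<forall>x\<in>fv e. x \<noteq> w \<longrightarrow> idx (u#G') x = idx (u#G) x"
    proof (intro ballI impI)
      fix x assume "x \<in> fv e" "x \<noteq> w"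
      then show "idx (u#G') x = idx (u#G) x" using Mu.prems(4) by (cases "x = u") auto
    qed
    have "db (rn w z e) (u#G') = db e (u#G)" by (rule Mu.IH[OF h1 h2 h3 h4])
    then show ?thesis using False by simp
  qed
next
  case (Act b e)
  have "db (rn w z e) G' = db e G" apply (rule Act.IH) using Act.prems by auto
  then show ?case by simp
next
  case (Plus e f)
  have "db (rn w z e) G' = db e G" apply (rule Plus.IH(1)) using Plus.prems by auto
  moreover have "db (rn w z f) G' = db f G" apply (rule Plus.IH(2)) using Plus.prems by auto
  ultimately show ?case by simp
qed simp

lemma subst_mu1: "subst (Mu v e) k v = Mu v e" by (subst subst.simps) simp
lemma subst_mu2: "w \<noteq> v \<Longrightarrow> w \<notin> fv k \<Longrightarrow> subst (Mu w e) k v = Mu w (subst e k v)" by (subst subst.simps) simp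
lemma subst_mu3: "w \<noteq> v \<Longrightarrow> w \<in> fv k \<Longrightarrow> z = fresh (vars e \<union> fv k \<union> {v, w}) \<Longrightarrow> subst (Mu w e) k v = Mu z (subst (rn w z e) k v)"
  by (subst subst.simps) simp
declare subst.simps(5)[simp del]

lemma L1: "idx G v = None \<Longrightarrow> (\<forall>u\<in>fv k. idx G u = None) \<Longrightarrow>
   db (subst g k v) G = dsub (db g G) (db k []) v"
proof (induction g k v arbitrary: G rule: subst.induct)
  case (2 u g v)
  then show ?case by (auto split: option.splits intro!: db_agree)
next
  case (5 w e k v)
  show ?case
  proof (cases "w = v")
    case True
    have nv: "v \<notin> dfv (db e (w#G))" using True by (simp add: dfv_db)
    have "dsub (db (Mu w e) G) (db k []) v = DM (dsub (db e (w#G)) (db k []) v)" by simp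
    also have "\<dots> = DM (db e (w#G))" using dsub_nofree[OF nv] by simp
    finally show ?thesis using True by (simp add: subst_mu1)
  next
    case False
    show ?thesis
    proof (cases "w \<in> fv k")
      case False2: False
      have "db (subst e k v) (w#G) = dsub (db e (w#G)) (db k []) v"
        apply (rule "5.IH"(1)) using False False2 "5.prems" by auto
      then show ?thesis using False False2 by (simp add: subst_mu2)
    next
      case True2: True
      define z where "z = fresh (vars e \<union> fv k \<union> {v, w})"
      have fin: "finite (vars e \<union> fv k \<union> {v, w})" by simp
      have lt: "\<And>x. x \<in> vars e \<union> fv k \<union> {v, w} \<Longrightarrow> x < z"
        using fresh_gt[OF fin] unfolding z_def by blast
      have zv: "z \<notin> vars e" "z \<noteq> v" "z \<noteq> w" "z \<notin> fv k"
        using lt[of z] by auto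
      have "db (subst (rn w z e) k v) (z#G) = dsub (db (rn w z e) (z#G)) (db k []) v"
      proof -
        have c1: "idx (z#G) v = None" using zv(2) "5.prems"(1) by simp
        have c2: "\<forall>u\<in>fv k. idx (z#G) u = None" using zv(4) "5.prems"(2) by auto
        have nn: "\<not> w \<notin> fv k" using True2 by simp
        show ?thesis using "5.IH"(2)[OF False nn, folded z_def, OF c1 c2] .
      qed
      moreover have "db (rn w z e) (z#G) = db e (w#G)"
        apply (rule db_rn) using zv fv_vars[of e] by auto
      moreover have "subst (Mu w e) k v = Mu z (subst (rn w z e) k v)"
        using False True2 z_def by (rule subst_mu3)
      ultimately show ?thesis by simp
    qed
  qed
qed auto

lemma idx_app: "idx (G @ [v]) u = (if u \<in> set G then idx G u else if u = v then Some (length G) else None)"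
  by (induction G) (auto simp: idx_None)

lemma opn_db: "opn (length G) v (db e (G @ [v])) = db e G"
proof (induction e arbitrary: G)
  case (Var u) then show ?case by (auto simp: idx_app idx_None split: option.splits dest: idx_Some_lt idx_Some_in)
next
  case (Mu w e) then show ?case using Mu.IH[of "w#G"] by simp
qed auto

inductive_simps out_simps[simp]: "out Zero w" "out (Var u) w" "out (Act a e) w" "out (Plus e f) w" "out (Mu u e) w"

inductive_simps dstep_simps[simp]: "dstep DZ a T" "dstep (DF u) a T" "dstep (DB i) a T" "dstep (DA b X) a T" "dstep (DP X Y) a T"

lemma dout_db: "w \<in> dout (db g G) \<longleftrightarrow> out g w \<and> idx G w = None"
  by (induction g arbitrary: G) (auto split: option.splits)

lemma out_db: "out g w \<longleftrightarrow> w \<in> dout (db g [])" by (simp add: dout_db)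

lemma T1: "step g a g' \<Longrightarrow> dstep (db g []) a (db g' [])"
proof (induction rule: step.induct)
  case (4 e a e' v)
  have E: "db e [] = opn 0 v (db e [v])" using opn_db[of "[]" v e] by simp
  have nv: "v \<notin> dfv (db e [v])" by (simp add: dfv_db)
  have "dstep (opn 0 v (db e [v])) a (db e' [])" using "4.IH" E by simp
  from dstep.dM[OF this nv] show ?case by (simp add: L1)
qed auto

lemma T2: "dstep (db g []) a T \<Longrightarrow> \<exists>g'. step g a g' \<and> T = db g' []"
proof (induction g arbitrary: T)
  case Zero then show ?case by simp
next
  case (Var u) then show ?case by (auto split: option.splits)
next
  case (Act b e)
  from Act.prems have "a = b" "T = db e []" by auto
  then show ?case using step.intros(1)[of a e] by blast
next
  case (Plus e f)
  from Plus.prems have "dstep (DP (db e []) (db f [])) a T" by simp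
  then show ?case
  proof (cases rule: dstep.cases)
    case dP1
    then obtain g' where "step e a g'" "T = db g' []" using Plus.IH(1) by auto
    then show ?thesis using step.intros(2)[of e a g' f] by blast
  next
    case dP2
    then obtain g' where "step f a g'" "T = db g' []" using Plus.IH(2) by auto
    then show ?thesis using step.intros(3)[of f a g' e] by blast
  qed
next
  case (Mu v e)
  define E where "E = db e [v]"
  from Mu.prems have "dstep (DM E) a T" by (simp add: E_def)
  then obtain x T' where x: "dstep (opn 0 x E) a T'" "x \<notin> dfv E" "T = dsub T' (DM E) x"
    by (cases rule: dstep.cases) auto
  have vE: "v \<notin> dfv E" unfolding E_def by (simp add: dfv_db)
  have "dstep (swp x v (opn 0 x E)) a (swp x v T')" using x(1) by (rule dstep_swp)
  moreover have "swp x v (opn 0 x E) = opn 0 v E" using x(2) vE by (simp add: swp_opn swp_id sw_def)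
  moreover have "opn 0 v E = db e []" unfolding E_def using opn_db[of "[]" v e] by simp
  ultimately have "dstep (db e []) a (swp x v T')" by simp
  then obtain e' where e': "step e a e'" "swp x v T' = db e' []" using Mu.IH by blast
  have vT: "v \<notin> dfv T' \<or> v = x" using dstep_dfv[OF x(1)] dfv_opn[of 0 x E] vE by auto
  have "db (subst e' (Mu v e) v) [] = dsub (swp x v T') (DM E) v" using e' by (simp add: L1 E_def)
  also have "\<dots> = T"
  proof (cases "v = x")
    case True
    then have "swp x v T' = T'" by (induction T') (auto simp: sw_def)
    then show ?thesis using True x(3) by simp
  next
    case False
    then show ?thesis using vT x(3) by (simp add: dsub_swp)
  qed
  finally have "db (subst e' (Mu v e) v) [] = T" .
  moreover have "step (Mu v e) a (subst e' (Mu v e) v)" using e'(1) by (rule step.intros(4))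
  ultimately show ?case by blast
qed


lemma alpha_bisim: "db x [] = db y [] \<Longrightarrow> bisim x y"
proof -
  assume h: "db x [] = db y []"
  define R where "R = (\<lambda>x y :: 'a exp. db x [] = db y [])"
  have "bisimulation R"
    unfolding bisimulation_def
  proof (intro allI impI)
    fix p q assume pq: "R p q"
    show "(\<forall>a x'. step p a x' \<longrightarrow> (\<exists>y'. step q a y' \<and> R x' y')) \<and>
          (\<forall>a y'. step q a y' \<longrightarrow> (\<exists>x'. step p a x' \<and> R x' y')) \<and>
          (\<forall>v. out p v = out q v)"
    proof (intro conjI)
    show "\<forall>a x'. step p a x' \<longrightarrow> (\<exists>y'. step q a y' \<and> R x' y')"
    proof (intro allI impI)
      fix a x' assume "step p a x'"
      then have "dstep (db q []) a (db x' [])" using T1 pq unfolding R_def by metis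
      then obtain y' where "step q a y'" "db x' [] = db y' []" using T2 by metis
      then show "\<exists>y'. step q a y' \<and> R x' y'" unfolding R_def by blast
    qed
    show "\<forall>a y'. step q a y' \<longrightarrow> (\<exists>x'. step p a x' \<and> R x' y')"
    proof (intro allI impI)
      fix a y' assume "step q a y'"
      then have "dstep (db p []) a (db y' [])" using T1 pq unfolding R_def by metis
      then obtain x' where "step p a x'" "db y' [] = db x' []" using T2 by metis
      then show "\<exists>x'. step p a x' \<and> R x' y'" unfolding R_def by auto
    qed
    show "\<forall>v. out p v = out q v" using pq unfolding R_def by (simp add: out_db)
    qed
  qed
  then show ?thesis using h unfolding bisim_def R_def by blast
qed

lemma alpha_abs: "db x [] = db y [] \<Longrightarrow> abs_qexp x = abs_qexp y"
  using alpha_bisim qexp.abs_eq_iff by blast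

lemma dcl_K: "dcl 0 (db k [])" using dcl_db[of "[]" k] by simp

lemma B1: "step (subst g k v) a x \<Longrightarrow>
  (\<exists>g'. step g a g' \<and> db x [] = db (subst g' k v) []) \<or> (out g v \<and> (\<exists>y. step k a y \<and> db x [] = db y []))"
proof -
  assume "step (subst g k v) a x"
  then have "dstep (db (subst g k v) []) a (db x [])" by (rule T1)
  then have "dstep (dsub (db g []) (db k []) v) a (db x [])" using L1[of "[]" v k g] by simp
  from DS1[OF this dcl_K] show ?thesis
  proof
    assume "\<exists>G'. dstep (db g []) a G' \<and> db x [] = dsub G' (db k []) v"
    then obtain G' where G': "dstep (db g []) a G'" "db x [] = dsub G' (db k []) v" by blast
    from T2[OF G'(1)] obtain g' where "step g a g'" "G' = db g' []" by blast
    then show ?thesis using G'(2) L1[of "[]" v k g'] by auto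
  next
    assume h: "v \<in> dout (db g []) \<and> dstep (db k []) a (db x [])"
    from T2[of k a "db x []"] h obtain y where "step k a y" "db x [] = db y []" by blast
    then show ?thesis using h by (auto simp: out_db)
  qed
qed

lemma B2: "step g a g' \<Longrightarrow> \<exists>x. step (subst g k v) a x \<and> db x [] = db (subst g' k v) []"
proof -
  assume st: "step g a g'"
  have "dstep (dsub (db g []) (db k []) v) a (dsub (db g' []) (db k []) v)" by (rule DS2[OF T1[OF st] dcl_K])
  then have "dstep (db (subst g k v) []) a (db (subst g' k v) [])" by (simp add: L1)
  from T2[OF this] show ?thesis by metis
qed

lemma B3: "out g v \<Longrightarrow> step k a y \<Longrightarrow> \<exists>x. step (subst g k v) a x \<and> db x [] = db y []"
proof -
  assume "out g v" "step k a y"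
  from DS3[of v "db g []" "db k []" a "db y []"] this
  have "dstep (db (subst g k v) []) a (db y [])" by (simp add: L1 out_db T1 dcl_K)
  from T2[OF this] show ?thesis by metis
qed

lemma BO: "out (subst g k v) w \<longleftrightarrow> (out g w \<and> w \<noteq> v) \<or> (out g v \<and> out k w)"
  by (simp add: out_db L1 DO)

inductive_cases stepMuE: "step (Mu v e) a y"

lemma beta_abs: "beta (abs_qexp x) = {Inl (a, abs_qexp x') | a x'. step x a x'} \<union> {Inr w | w. out x w}"
proof -
  have b: "bisim (rep_qexp (abs_qexp x)) x"
    by (rule Quotient3_rep_abs[OF Quotient3_qexp]) (rule equivp_reflp[OF equivp_bisim])
  then obtain R where R: "bisimulation R" "R (rep_qexp (abs_qexp x)) x" unfolding bisim_def by blast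
  define r where "r = rep_qexp (abs_qexp x)"
  have RA: "\<forall>p q. R p q \<longrightarrow> (\<forall>a x'. step p a x' \<longrightarrow> (\<exists>y'. step q a y' \<and> R x' y')) \<and>
      (\<forall>a y'. step q a y' \<longrightarrow> (\<exists>x'. step p a x' \<and> R x' y')) \<and>
      (\<forall>v. out p v \<longleftrightarrow> out q v)" using R(1) by (simp only: bisimulation_def)
  have Rr: "R r x" using R(2) unfolding r_def .
  note RR = RA[rule_format, OF Rr]
  have R1: "\<And>a e'. step r a e' \<Longrightarrow> \<exists>y'. step x a y' \<and> R e' y'"
    using conjunct1[OF RR] by blast
  have R2: "\<And>a y'. step x a y' \<Longrightarrow> \<exists>e'. step r a e' \<and> R e' y'"
    using conjunct1[OF conjunct2[OF RR]] by blast
  have R3: "\<And>v. out r v = out x v"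
    using conjunct2[OF conjunct2[OF RR]] by blast
  have bR: "abs_qexp p = abs_qexp q" if "R p q" for p q
  proof -
    have "bisim p q" unfolding bisim_def using R(1) that by blast
    then show ?thesis by (simp add: qexp.abs_eq_iff)
  qed
  have A: "{Inl (a, abs_qexp e') |a e'. step r a e'} = {Inl (a, abs_qexp x') | a x'. step x a x'}"
  proof (intro equalityI subsetI)
    fix z assume "z \<in> {Inl (a, abs_qexp e') |a e'. step r a e'}"
    then obtain a e' where z: "z = Inl (a, abs_qexp e')" "step r a e'" by blast
    from R1[OF z(2)] obtain y' where y': "step x a y'" "R e' y'" by blast
    have "z = Inl (a, abs_qexp y')" using z(1) bR[OF y'(2)] by simp
    then show "z \<in> {Inl (a, abs_qexp x') | a x'. step x a x'}" using y'(1) by blast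
  next
    fix z assume "z \<in> {Inl (a, abs_qexp x') | a x'. step x a x'}"
    then obtain a y' where z: "z = Inl (a, abs_qexp y')" "step x a y'" by blast
    from R2[OF z(2)] obtain e' where e': "step r a e'" "R e' y'" by blast
    have "z = Inl (a, abs_qexp e')" using z(1) bR[OF e'(2)] by simp
    then show "z \<in> {Inl (a, abs_qexp e') |a e'. step r a e'}" using e'(1) by blast
  qed
  show ?thesis unfolding beta_def r_def[symmetric] A using R3 by simp
qed


lemma infz_bounds: "(\<And>y. y \<in> B \<Longrightarrow> 0 \<le> f y \<and> f y \<le> 1) \<Longrightarrow> 0 \<le> infz (f ` B) \<and> infz (f ` B) \<le> 1"
proof -
  assume h: "\<And>y. y \<in> B \<Longrightarrow> 0 \<le> f y \<and> f y \<le> 1"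
  show ?thesis
  proof (cases "B = {}")
    case True then show ?thesis by (simp add: infz_def)
  next
    case False
    then obtain y where y: "y \<in> B" by blast
    have bb: "bdd_below (f ` B)" using h by (intro bdd_belowI[of _ 0]) auto
    have "Inf (f ` B) \<le> f y" using y bb by (auto intro: cInf_lower)
    moreover have "0 \<le> Inf (f ` B)" using False h by (auto intro: cInf_greatest)
    ultimately show ?thesis using False h[OF y] by (simp add: infz_def)
  qed
qed

lemma infz_le: "y \<in> B \<Longrightarrow> (\<And>y. y \<in> B \<Longrightarrow> 0 \<le> f y) \<Longrightarrow> infz (f ` B) \<le> f y"
proof -
  assume y: "y \<in> B" and h: "\<And>y. y \<in> B \<Longrightarrow> 0 \<le> f y"
  have bb: "bdd_below (f ` B)" using h by (intro bdd_belowI[of _ 0]) auto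
  then show ?thesis using y by (auto simp: infz_def intro: cInf_lower)
qed

lemma infz_shift:
  assumes "\<And>y. y \<in> B \<Longrightarrow> f y \<le> g y + c" "0 \<le> c" "\<And>y. y \<in> B \<Longrightarrow> 0 \<le> f y"
  shows "infz (f ` B) \<le> infz (g ` B) + c"
proof (cases "B = {}")
  case True then show ?thesis using assms by (simp add: infz_def)
next
  case False
  have "infz (f ` B) - c \<le> Inf (g ` B)"
  proof (rule cInf_greatest)
    show "g ` B \<noteq> {}" using False by simp
    fix z assume "z \<in> g ` B"
    then obtain y where y: "y \<in> B" "z = g y" by blast
    have "infz (f ` B) \<le> f y" by (rule infz_le[OF y(1) assms(3)])
    then show "infz (f ` B) - c \<le> z" using assms(1)[OF y(1)] y(2) by simp
  qed
  then show ?thesis using False by (simp add: infz_def)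
qed

lemma infz_lt: "infz (f ` B) < t \<Longrightarrow> t \<le> 1 \<Longrightarrow> \<exists>y\<in>B. f y < t"
proof -
  assume a: "infz (f ` B) < t" "t \<le> 1"
  then have ne: "B \<noteq> {}" by (auto simp: infz_def)
  then have "Inf (f ` B) < t" using a by (simp add: infz_def)
  then show ?thesis using ne cInf_lessD[of "f ` B" t] by auto
qed

lemma supz_le: "(\<And>x. x \<in> A \<Longrightarrow> f x \<le> M) \<Longrightarrow> 0 \<le> M \<Longrightarrow> supz (f ` A) \<le> M"
  by (auto simp: supz_def intro: cSup_least)

lemma supz_ge: "x \<in> A \<Longrightarrow> (\<And>x. x \<in> A \<Longrightarrow> f x \<le> 1) \<Longrightarrow> f x \<le> supz (f ` A)"
proof -
  assume x: "x \<in> A" and h: "\<And>x. x \<in> A \<Longrightarrow> f x \<le> 1"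
  have "bdd_above (f ` A)" using h by (intro bdd_aboveI[of _ 1]) auto
  then show ?thesis using x by (auto simp: supz_def intro: cSup_upper)
qed

lemma supz_bounds: "(\<And>x. x \<in> A \<Longrightarrow> 0 \<le> f x \<and> f x \<le> 1) \<Longrightarrow> 0 \<le> supz (f ` A) \<and> supz (f ` A) \<le> 1"
proof -
  assume h: "\<And>x. x \<in> A \<Longrightarrow> 0 \<le> f x \<and> f x \<le> 1"
  show ?thesis
  proof (cases "A = {}")
    case True then show ?thesis by (simp add: supz_def)
  next
    case False
    then obtain x where x: "x \<in> A" by blast
    have "f x \<le> supz (f ` A)" using supz_ge[OF x] h by blast
    moreover have "supz (f ` A) \<le> 1" using supz_le[of A f 1] h by auto
    ultimately show ?thesis using h[OF x] by simp
  qed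
qed

definition hh :: "('y \<Rightarrow> 'y \<Rightarrow> real) \<Rightarrow> 'y set \<Rightarrow> 'y set \<Rightarrow> real" where
  "hh r A B = supz ((\<lambda>x. infz ((\<lambda>y. r x y) ` B)) ` A)"

lemma hausdorff_hh: "hausdorff r A B = max (hh r A B) (hh r B A)"
  unfolding hausdorff_def hh_def by simp

definition bnd :: "('y \<Rightarrow> 'y \<Rightarrow> real) \<Rightarrow> bool" where
  "bnd r \<longleftrightarrow> (\<forall>x y. 0 \<le> r x y \<and> r x y \<le> 1)"

lemma ib_r: "bnd r \<Longrightarrow> 0 \<le> infz (r x ` S) \<and> infz (r x ` S) \<le> 1"
  by (rule infz_bounds) (auto simp: bnd_def)

lemma hh_bounds: "bnd r \<Longrightarrow> 0 \<le> hh r A B \<and> hh r A B \<le> 1"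
  unfolding hh_def bnd_def by (intro supz_bounds infz_bounds) auto

lemma hausdorff_bounds: "bnd r \<Longrightarrow> 0 \<le> hausdorff r A B \<and> hausdorff r A B \<le> 1"
  using hh_bounds[of r A B] hh_bounds[of r B A] unfolding hausdorff_hh max_def by auto

lemma hh_shift: "bnd r \<Longrightarrow> bnd r' \<Longrightarrow> (\<And>x y. r x y \<le> r' x y + c) \<Longrightarrow> 0 \<le> c \<Longrightarrow>
   hh r A B \<le> hh r' A B + c"
  unfolding hh_def
proof -
  assume b: "bnd r" "bnd r'" and s: "\<And>x y. r x y \<le> r' x y + c" and c: "0 \<le> c"
  show "supz ((\<lambda>x. infz (r x ` B)) ` A) \<le> supz ((\<lambda>x. infz (r' x ` B)) ` A) + c"
  proof (rule supz_le)
    fix x assume x: "x \<in> A"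
    have "infz (r x ` B) \<le> infz (r' x ` B) + c"
      by (rule infz_shift) (use s c b in \<open>auto simp: bnd_def\<close>)
    also have "infz (r' x ` B) \<le> supz ((\<lambda>x. infz (r' x ` B)) ` A)"
      by (rule supz_ge[OF x]) (use ib_r[OF b(2)] in auto)
    finally show "infz (r x ` B) \<le> supz ((\<lambda>x. infz (r' x ` B)) ` A) + c" by simp
  next
    show "0 \<le> supz ((\<lambda>x. infz (r' x ` B)) ` A) + c" using hh_bounds[OF b(2), of A B] c by (simp add: hh_def)
  qed
qed

lemma hausdorff_shift: "bnd r \<Longrightarrow> bnd r' \<Longrightarrow> (\<And>x y. r x y \<le> r' x y + c) \<Longrightarrow> 0 \<le> c \<Longrightarrow>
   hausdorff r A B \<le> hausdorff r' A B + c"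
  using hh_shift[of r r' c A B] hh_shift[of r r' c B A] by (auto simp: hausdorff_hh)

lemma hh_zero: "bnd r \<Longrightarrow> (\<And>x. r x x = 0) \<Longrightarrow> hh r A A = 0"
proof -
  assume b: "bnd r" and z: "\<And>x. r x x = 0"
  have "hh r A A \<le> 0" unfolding hh_def
  proof (rule supz_le)
    fix x assume x: "x \<in> A"
    show "infz (r x ` A) \<le> 0" using infz_le[OF x, of "r x"] b z by (auto simp: bnd_def)
  qed simp
  then show ?thesis using hh_bounds[OF b, of A A] by simp
qed

lemma hh_tri:
  assumes b: "bnd r" and t: "\<And>x y z. r x z \<le> r x y + r y z"
  shows "hh r A C \<le> hh r A B + hh r B C"
  unfolding hh_def
proof (rule supz_le)
  fix x assume x: "x \<in> A"
  have b0: "\<And>x y. 0 \<le> r x y" "\<And>x y. r x y \<le> 1" using b by (auto simp: bnd_def)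
  have ib: "\<And>x S. 0 \<le> infz (r x ` S) \<and> infz (r x ` S) \<le> 1" using ib_r[OF b] by blast
  have hb: "\<And>S T. 0 \<le> supz ((\<lambda>x. infz (r x ` T)) ` S)" using hh_bounds[OF b] unfolding hh_def by blast
  have hA: "infz (r x ` B) \<le> supz ((\<lambda>x. infz (r x ` B)) ` A)" by (rule supz_ge[OF x]) (use ib in auto)
  show "infz (r x ` C) \<le> supz ((\<lambda>x. infz (r x ` B)) ` A) + supz ((\<lambda>x. infz (r x ` C)) ` B)"
  proof (cases "B = {}")
    case True
    then have "infz (r x ` B) = 1" by (simp add: infz_def)
    then show ?thesis using hA ib[of x C] hb[where S=B and T=C] by linarith
  next
    case Bne: False
    show ?thesis
    proof (cases "C = {}")
      case True
      obtain y where y: "y \<in> B" using Bne by blast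
      have "infz (r y ` C) = 1" using True by (simp add: infz_def)
      moreover have "infz (r y ` C) \<le> supz ((\<lambda>x. infz (r x ` C)) ` B)" by (rule supz_ge[OF y]) (use ib in auto)
      ultimately show ?thesis using ib[of x C] hb[where S=A and T=B] by linarith
    next
      case Cne: False
      have "infz (r x ` C) - supz ((\<lambda>x. infz (r x ` C)) ` B) \<le> infz (r x ` B)"
      proof -
        have "infz (r x ` C) - supz ((\<lambda>x. infz (r x ` C)) ` B) \<le> Inf (r x ` B)"
        proof (rule cInf_greatest)
          show "r x ` B \<noteq> {}" using Bne by simp
          fix w assume "w \<in> r x ` B"
          then obtain y where y: "y \<in> B" "w = r x y" by blast
          have "infz (r x ` C) - r x y \<le> Inf (r y ` C)"
          proof (rule cInf_greatest)
            show "r y ` C \<noteq> {}" using Cne by simp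
            fix u assume "u \<in> r y ` C"
            then obtain z where z: "z \<in> C" "u = r y z" by blast
            have "infz (r x ` C) \<le> r x z" by (rule infz_le[OF z(1)]) (use b0 in auto)
            then show "infz (r x ` C) - r x y \<le> u" using t[of x z y] z(2) by simp
          qed
          then have "infz (r x ` C) - r x y \<le> infz (r y ` C)" using Cne by (simp add: infz_def)
          moreover have "infz (r y ` C) \<le> supz ((\<lambda>x. infz (r x ` C)) ` B)" by (rule supz_ge[OF y(1)]) (use ib in auto)
          ultimately show "infz (r x ` C) - supz ((\<lambda>x. infz (r x ` C)) ` B) \<le> w" using y(2) by simp
        qed
        then show ?thesis using Bne by (simp add: infz_def)
      qed
      then show ?thesis using hA by linarith
    qed
  qed
next
  show "0 \<le> supz ((\<lambda>x. infz (r x ` B)) ` A) + supz ((\<lambda>x. infz (r x ` C)) ` B)"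
    using hh_bounds[OF b, of A B] hh_bounds[OF b, of B C] by (simp add: hh_def)
qed

lemma hausdorff_tri:
  assumes b: "bnd r" and t: "\<And>x y z. r x z \<le> r x y + r y z"
  shows "hausdorff r A C \<le> hausdorff r A B + hausdorff r B C"
  using hh_tri[OF b t, where A=A and B=B and C=C] hh_tri[OF b t, where A=C and B=B and C=A]
  unfolding hausdorff_hh max_def by auto


lemma sum_pair_cases:
  "(\<And>a x b y. P (Inl (a,x)) (Inl (b,y))) \<Longrightarrow> (\<And>a x w. P (Inl (a,x)) (Inr w)) \<Longrightarrow>
   (\<And>w a x. P (Inr w) (Inl (a,x))) \<Longrightarrow> (\<And>v w. P (Inr v) (Inr w)) \<Longrightarrow> P p q"
  by (cases p; cases q) (metis prod.collapse)+

lemma bndD: "bnd d \<Longrightarrow> 0 \<le> d x y" "bnd d \<Longrightarrow> d x y \<le> 1" unfolding bnd_def by auto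

lemma dup_bnd: "bnd d \<Longrightarrow> bnd (dup d)"
  unfolding bnd_def
proof (intro allI)
  fix p q assume b: "\<forall>x y. 0 \<le> d x y \<and> d x y \<le> 1"
  have b1: "\<And>x y. 0 \<le> d x y" "\<And>x y. d x y \<le> 1" using b by auto
  have b2: "\<And>x y. d x y \<le> 2" using b1(2) by (smt (verit))
  show "0 \<le> dup d p q \<and> dup d p q \<le> 1"
    by (rule sum_pair_cases[of _ p q]) (use b1 b2 in auto)
qed

lemma dup_shift: "(\<And>x y. d x y \<le> d' x y + c) \<Longrightarrow> 0 \<le> c \<Longrightarrow> dup d p q \<le> dup d' p q + c / 2"
proof -
  assume s: "\<And>x y. d x y \<le> d' x y + c" and c: "0 \<le> c"
  show ?thesis
  proof (rule sum_pair_cases[of _ p q])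
    fix a x b y
    show "dup d (Inl (a, x)) (Inl (b, y)) \<le> dup d' (Inl (a, x)) (Inl (b, y)) + c / 2"
      using s[of x y] c by auto
  qed (use c in auto)
qed

lemma dup_zero: "(\<And>x. d x x = 0) \<Longrightarrow> dup d p p = 0"
  by (rule sum_pair_cases[of "\<lambda>p q. p = q \<longrightarrow> dup d p q = 0" p p, simplified]) auto

lemma dup_tri: "bnd d \<Longrightarrow> (\<And>x y z. d x z \<le> d x y + d y z) \<Longrightarrow> dup d p r \<le> dup d p q + dup d q r"
proof -
  assume b: "bnd d" and t: "\<And>x y z. d x z \<le> d x y + d y z"
  have db: "bnd (dup d)" by (rule dup_bnd[OF b])
  have nn: "\<And>p q. 0 \<le> dup d p q" "\<And>p q. dup d p q \<le> 1" using db by (auto simp: bnd_def)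
  have d0: "\<And>x y. 0 \<le> d x y" using bndD[OF b] by auto
  show ?thesis
  proof (rule sum_pair_cases[of _ p r])
    fix a x b y
    show "dup d (Inl (a, x)) (Inl (b, y)) \<le> dup d (Inl (a, x)) q + dup d q (Inl (b, y))"
    proof (cases q)
      case (Inl q')
      obtain c z where q': "q' = (c, z)" by (cases q')
      show ?thesis using Inl q' t[where x=x and y=z and z=y] nn[of "Inl (a,x)" "Inl (b,y)"] bndD[OF b, of x z] bndD[OF b, of z y] by auto
    next
      case (Inr w) then show ?thesis using nn[of "Inl (a,x)" "Inl (b,y)"] by simp
    qed
  next
    fix a x w
    show "dup d (Inl (a, x)) (Inr w) \<le> dup d (Inl (a, x)) q + dup d q (Inr w)"
    proof (cases q)
      case (Inl q')
      obtain c z where q': "q' = (c, z)" by (cases q')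
      show ?thesis using Inl q' nn d0 by auto
    next
      case (Inr u) then show ?thesis using nn by auto
    qed
  next
    fix w a x
    show "dup d (Inr w) (Inl (a, x)) \<le> dup d (Inr w) q + dup d q (Inl (a, x))"
    proof (cases q)
      case (Inl q')
      obtain c z where q': "q' = (c, z)" by (cases q')
      show ?thesis using Inl q' nn d0 by auto
    next
      case (Inr u) then show ?thesis using nn by auto
    qed
  next
    fix v w
    show "dup d (Inr v) (Inr w) \<le> dup d (Inr v) q + dup d q (Inr w)"
    proof (cases q)
      case (Inl q')
      obtain c z where q': "q' = (c, z)" by (cases q')
      show ?thesis using Inl q' nn d0 by auto
    next
      case (Inr u) then show ?thesis using nn by auto
    qed
  qed
qed

lemma Phi_bnd: "bnd d \<Longrightarrow> bnd (Phi d)"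
  unfolding bnd_def[of "Phi d"] Phi_def using hausdorff_bounds[OF dup_bnd] by blast

lemma Phi_shift: "bnd d \<Longrightarrow> bnd d' \<Longrightarrow> (\<And>x y. d x y \<le> d' x y + c) \<Longrightarrow> 0 \<le> c \<Longrightarrow>
  Phi d x y \<le> Phi d' x y + c / 2"
  unfolding Phi_def by (rule hausdorff_shift) (auto intro: dup_bnd dup_shift)

lemma Phi_mono: "bnd d \<Longrightarrow> bnd d' \<Longrightarrow> (\<And>x y. d x y \<le> d' x y) \<Longrightarrow> Phi d x y \<le> Phi d' x y"
  using Phi_shift[of d d' 0 x y] by simp

lemma pm_bnd: "pseudometric d \<Longrightarrow> bnd d" unfolding pseudometric_def bnd_def by blast

lemma Phi_pm: "pseudometric d \<Longrightarrow> pseudometric (Phi d)"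
proof -
  assume pm: "pseudometric d"
  have b: "bnd d" by (rule pm_bnd[OF pm])
  have bu: "bnd (dup d)" by (rule dup_bnd[OF b])
  have z: "\<And>x. d x x = 0" and t: "\<And>x y z. d x z \<le> d x y + d y z" using pm by (auto simp: pseudometric_def)
  have "bnd (Phi d)" by (rule Phi_bnd[OF b])
  moreover have "\<And>x. Phi d x x = 0"
    unfolding Phi_def hausdorff_hh using hh_zero[OF bu dup_zero[OF z]] by simp
  moreover have "\<And>x y. Phi d x y = Phi d y x"
    unfolding Phi_def hausdorff_hh by (simp add: max.commute)
  moreover have "\<And>x y z. Phi d x z \<le> Phi d x y + Phi d y z"
    unfolding Phi_def by (rule hausdorff_tri[OF bu]) (rule dup_tri[OF b t])
  ultimately show ?thesis unfolding pseudometric_def bnd_def by blast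
qed

lemma le_by_pow: "(\<And>n. (a::real) \<le> b + (1/2)^n) \<Longrightarrow> a \<le> b"
proof (rule ccontr)
  assume h: "\<And>n. a \<le> b + (1/2)^n" and "\<not> a \<le> b"
  then have "a - b > 0" by simp
  from real_arch_pow_inv[OF this, of "1/2"] obtain n where "(1/2::real)^n < a - b" by auto
  with h[of n] show False by simp
qed

lemma cmp:
  assumes bA: "bnd A" and bB: "bnd B" and hA: "\<And>x y. A x y \<le> Phi A x y" and hB: "\<And>x y. Phi B x y \<le> B x y"
  shows "A x y \<le> B x y"
proof -
  define S where "S = (\<lambda>(x,y). A x y - B x y) ` UNIV"
  define \<delta> where "\<delta> = Sup S"
  have bdd: "bdd_above S"
  proof (rule bdd_aboveI[of _ 1])
    fix z assume "z \<in> S"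
    then obtain a b where "z = A a b - B a b" unfolding S_def by auto
    then show "z \<le> 1" using bndD(2)[OF bA, of a b] bndD(1)[OF bB, of a b] by simp
  qed
  have Sle: "A x y - B x y \<le> \<delta>" for x y
  proof -
    have "A x y - B x y \<in> S" unfolding S_def by (rule image_eqI[of _ _ "(x,y)"]) auto
    then show ?thesis unfolding \<delta>_def by (rule cSup_upper[OF _ bdd])
  qed
  define c where "c = max 0 \<delta>"
  have c0: "0 \<le> c" unfolding c_def by simp
  have "\<And>x y. A x y \<le> B x y + c" using Sle unfolding c_def by (smt (verit))
  then have "\<And>x y. Phi A x y \<le> Phi B x y + c / 2" using Phi_shift[OF bA bB _ c0] by blast
  then have "\<And>x y. A x y - B x y \<le> c / 2" using hA hB by (smt (verit))
  then have "\<delta> \<le> c / 2" unfolding \<delta>_def S_def by (intro cSup_least) auto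
  then have "\<delta> \<le> 0" unfolding c_def max_def by (auto split: if_splits)
  then show ?thesis using Sle[of x y] by simp
qed

definition it :: "nat \<Rightarrow> 'a qexp \<Rightarrow> 'a qexp \<Rightarrow> real" where
  "it n = (Phi ^^ n) (\<lambda>_ _. 0)"

lemma it_Suc: "it (Suc n) = Phi (it n)" unfolding it_def by simp
lemma it_0: "it 0 = (\<lambda>_ _. 0)" unfolding it_def by simp

lemma it_pm: "pseudometric (it n)"
proof (induction n)
  case 0 then show ?case by (simp add: it_0 pseudometric_def)
next
  case (Suc n) then show ?case by (simp add: it_Suc Phi_pm)
qed

lemma it_bnd: "bnd (it n)" by (rule pm_bnd[OF it_pm])

lemma it_mono1: "it n x y \<le> it (Suc n) x y"
proof (induction n arbitrary: x y)
  case 0 then show ?case using bndD(1)[OF it_bnd[of "Suc 0"]] by (simp add: it_0)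
next
  case (Suc n)
  have "Phi (it n) x y \<le> Phi (it (Suc n)) x y" by (rule Phi_mono[OF it_bnd it_bnd Suc.IH])
  then show ?case by (simp add: it_Suc)
qed

lemma it_mono: "n \<le> m \<Longrightarrow> it n x y \<le> it m x y"
proof (induction m)
  case 0 then show ?case by simp
next
  case (Suc m)
  then show ?case using it_mono1[of m x y] by (cases "n = Suc m") auto
qed

lemma it_close: "it (m + n) x y \<le> it n x y + (1/2)^n"
proof (induction n arbitrary: m x y)
  case 0 then show ?case using bndD(2)[OF it_bnd[of m]] by (simp add: it_0)
next
  case (Suc n)
  have "Phi (it (m + n)) x y \<le> Phi (it n) x y + (1/2)^n / 2"
    by (rule Phi_shift[OF it_bnd it_bnd Suc.IH]) simp
  then show ?case by (simp add: it_Suc)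
qed

definition dstar :: "'a qexp \<Rightarrow> 'a qexp \<Rightarrow> real" where
  "dstar x y = Sup (range (\<lambda>n. it n x y))"

lemma dstar_ge: "it n x y \<le> dstar x y"
  unfolding dstar_def by (rule cSUP_upper) (use it_bnd in \<open>auto simp: bnd_def intro!: bdd_aboveI[of _ 1]\<close>)

lemma dstar_le: "dstar x y \<le> it n x y + (1/2)^n"
  unfolding dstar_def
proof (rule cSUP_least)
  fix m :: nat
  have "it m x y \<le> it (m + n) x y" by (rule it_mono) simp
  also have "\<dots> \<le> it n x y + (1/2)^n" by (rule it_close)
  finally show "it m x y \<le> it n x y + (1/2)^n" .
qed simp

lemma it_zero: "it n x x = 0" using it_pm[of n] unfolding pseudometric_def by blast
lemma it_sym: "it n x y = it n y x" using it_pm[of n] unfolding pseudometric_def by blast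
lemma it_tri: "it n x z \<le> it n x y + it n y z" using it_pm[of n] unfolding pseudometric_def by blast

lemma dstar_b0: "0 \<le> dstar x y" using dstar_ge[of 0 x y] by (simp add: it_0)
lemma dstar_b1: "dstar x y \<le> 1" unfolding dstar_def
  by (rule cSUP_least) (use bndD(2)[OF it_bnd] in auto)
lemma dstar_zero: "dstar x x = 0"
proof -
  have "dstar x x \<le> 0"
  proof (rule le_by_pow)
    fix n
    show "dstar x x \<le> 0 + (1/2)^n" using dstar_le[of x x n] it_zero[of n x] by simp
  qed
  then show ?thesis using dstar_b0[of x x] by simp
qed
lemma dstar_sym: "dstar x y = dstar y x" unfolding dstar_def using it_sym by metis
lemma dstar_tri: "dstar x z \<le> dstar x y + dstar y z"
proof (rule le_by_pow)
  fix n
  have "dstar x z \<le> it n x z + (1/2)^n" by (rule dstar_le)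
  also have "it n x z \<le> it n x y + it n y z" by (rule it_tri)
  finally show "dstar x z \<le> dstar x y + dstar y z + (1/2)^n"
    using dstar_ge[of n x y] dstar_ge[of n y z] by simp
qed

lemma dstar_pm: "pseudometric dstar"
  unfolding pseudometric_def using dstar_b0 dstar_b1 dstar_zero dstar_sym dstar_tri by blast

lemma dstar_fix_pt: "Phi dstar x y = dstar x y"
proof -
  have bs: "bnd dstar" by (rule pm_bnd[OF dstar_pm])
  have "Phi dstar x y \<le> dstar x y"
  proof (rule le_by_pow)
    fix n
    have "Phi dstar x y \<le> Phi (it n) x y + (1/2)^n / 2"
      by (rule Phi_shift[OF bs it_bnd dstar_le]) simp
    also have "Phi (it n) x y \<le> dstar x y" using dstar_ge[of "Suc n" x y] by (simp add: it_Suc)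
    finally have "Phi dstar x y \<le> dstar x y + (1/2)^n / 2" by simp
    moreover have "0 \<le> (1/2::real)^n" by simp
    ultimately show "Phi dstar x y \<le> dstar x y + (1/2)^n" by linarith
  qed
  moreover have "dstar x y \<le> Phi dstar x y"
  proof (rule le_by_pow)
    fix n
    have "dstar x y \<le> it (Suc n) x y + (1/2)^(Suc n)" by (rule dstar_le)
    also have "it (Suc n) x y \<le> Phi dstar x y" unfolding it_Suc
      by (rule Phi_mono[OF it_bnd bs dstar_ge])
    finally have "dstar x y \<le> Phi dstar x y + (1/2)^n / 2" by simp
    moreover have "0 \<le> (1/2::real)^n" by simp
    ultimately show "dstar x y \<le> Phi dstar x y + (1/2)^n" by linarith
  qed
  ultimately show "Phi dstar x y = dstar x y" by simp
qed

lemma dstar_fix: "Phi dstar = dstar"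
  by (intro ext) (rule dstar_fix_pt)


lemma dstar_least: "pseudometric d \<Longrightarrow> Phi d = d \<Longrightarrow> dstar x y \<le> d x y"
proof -
  assume pd: "pseudometric d" and fd: "Phi d = d"
  have hA: "\<And>a b. dstar a b \<le> Phi dstar a b" by (simp add: dstar_fix_pt)
  have hB: "\<And>a b. Phi d a b \<le> d a b" using fd by simp
  show ?thesis by (rule cmp[OF pm_bnd[OF dstar_pm] pm_bnd[OF pd] hA hB])
qed

lemma bd_eq: "bd = dstar"
  unfolding bd_def
proof (rule the_equality)
  show "pseudometric dstar \<and> Phi dstar = dstar \<and> (\<forall>d'. pseudometric d' \<and> Phi d' = d' \<longrightarrow> dstar \<le> d')"
    using dstar_pm dstar_fix dstar_least by (auto simp: le_fun_def)
next
  fix d assume d: "pseudometric d \<and> Phi d = d \<and> (\<forall>d'. pseudometric d' \<and> Phi d' = d' \<longrightarrow> d \<le> d')"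
  then have "d \<le> dstar" using dstar_pm dstar_fix by blast
  moreover have "dstar \<le> d" using d dstar_least by (auto simp: le_fun_def)
  ultimately show "d = dstar" by (rule antisym)
qed

lemma bd_pm: "pseudometric bd" unfolding bd_eq by (rule dstar_pm)
lemma bd_fix: "Phi bd = bd" unfolding bd_eq by (rule dstar_fix)
lemma bd_bnd: "bnd bd" using pm_bnd[OF bd_pm] .


abbreviation Q :: "'a exp \<Rightarrow> 'a qexp" where "Q \<equiv> abs_qexp"

lemma bd_fix_pt: "Phi bd x y = bd x y" using bd_fix by (metis)

lemma dup_bd_bnd: "bnd (dup bd)" by (rule dup_bnd[OF bd_bnd])

lemma infz_le_bd:
  assumes "p \<in> beta x"
  shows "infz (dup bd p ` beta y) \<le> bd x y"
proof -
  have "infz (dup bd p ` beta y) \<le> hh (dup bd) (beta x) (beta y)"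
    unfolding hh_def by (rule supz_ge[OF assms]) (use ib_r[OF dup_bd_bnd] in auto)
  also have "\<dots> \<le> hausdorff (dup bd) (beta x) (beta y)" by (simp add: hausdorff_hh)
  also have "\<dots> = bd x y" using bd_fix_pt[of x y] by (simp add: Phi_def)
  finally show ?thesis .
qed

lemma find_q:
  assumes "p \<in> beta x" "bd x y < t" "t \<le> 1"
  shows "\<exists>q\<in>beta y. dup bd p q < t"
proof -
  have "infz (dup bd p ` beta y) < t" using infz_le_bd[OF assms(1), of y] assms(2) by simp
  from infz_lt[OF this assms(3)] show ?thesis .
qed

lemma HL1:
  assumes "bd (Q x) (Q y) < t" "t \<le> 1" "step x a x'"
  shows "\<exists>y'. step y a y' \<and> bd (Q x') (Q y') / 2 < t"
proof -
  have "Inl (a, Q x') \<in> beta (Q x)" using assms(3) by (auto simp: beta_abs)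
  from find_q[OF this assms(1,2)] obtain q where q: "q \<in> beta (Q y)" "dup bd (Inl (a, Q x')) q < t" by blast
  from q(1) have "(\<exists>b y'. q = Inl (b, Q y') \<and> step y b y') \<or> (\<exists>w. q = Inr w)" by (auto simp: beta_abs)
  then show ?thesis
  proof
    assume "\<exists>b y'. q = Inl (b, Q y') \<and> step y b y'"
    then obtain b y' where by': "q = Inl (b, Q y')" "step y b y'" by blast
    show ?thesis
    proof (cases "a = b")
      case True then show ?thesis using by' q(2) by auto
    next
      case False then show ?thesis using by' q(2) assms(2) by auto
    qed
  next
    assume "\<exists>w. q = Inr w"
    then show ?thesis using q(2) assms(2) by auto
  qed
qed

lemma HL2:
  assumes "bd (Q x) (Q y) < 1" "out x w"
  shows "out y w"
proof -
  have "Inr w \<in> beta (Q x)" using assms(2) by (auto simp: beta_abs)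
  from find_q[OF this assms(1)] obtain q where q: "q \<in> beta (Q y)" "dup bd (Inr w) q < 1" by auto
  from q(1) have "(\<exists>b y'. q = Inl (b, Q y') \<and> step y b y') \<or> (\<exists>u. q = Inr u \<and> out y u)" by (auto simp: beta_abs)
  then show ?thesis
  proof
    assume "\<exists>b y'. q = Inl (b, Q y') \<and> step y b y'"
    then show ?thesis using q(2) by auto
  next
    assume "\<exists>u. q = Inr u \<and> out y u"
    then obtain u where "q = Inr u" "out y u" by blast
    then show ?thesis using q(2) by (cases "u = w") auto
  qed
qed


definition W :: "'a qexp \<Rightarrow> 'a qexp \<Rightarrow> real set" where
  "W X Y = {max (bd (Q g) (Q h)) (bd (Q e) (Q f)) | g h e f v.
              X = Q (subst g (Mu v e) v) \<and> Y = Q (subst h (Mu v f) v)}"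

definition D :: "'a qexp \<Rightarrow> 'a qexp \<Rightarrow> real" where
  "D X Y = min (bd X Y) (infz (W X Y))"

lemma bd0: "0 \<le> bd x y" using bndD(1)[OF bd_bnd] .
lemma bd1: "bd x y \<le> 1" using bndD(2)[OF bd_bnd] .
lemma bd_sym: "bd x y = bd y x" using bd_pm unfolding pseudometric_def by blast
lemma bd_zero: "bd x x = 0" using bd_pm unfolding pseudometric_def by blast

lemma W_nonneg: "t \<in> W X Y \<Longrightarrow> 0 \<le> t"
  unfolding W_def using bd0 by (auto simp: le_max_iff_disj)

lemma infz_W0: "0 \<le> infz (W X Y)"
proof (cases "W X Y = {}")
  case True then show ?thesis by (simp add: infz_def)
next
  case False
  then have "0 \<le> Inf (W X Y)" using W_nonneg by (intro cInf_greatest) auto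
  then show ?thesis using False by (simp add: infz_def)
qed

lemma infz_W_le: "t \<in> W X Y \<Longrightarrow> infz (W X Y) \<le> t"
proof -
  assume t: "t \<in> W X Y"
  have "bdd_below (W X Y)" using W_nonneg by (intro bdd_belowI[of _ 0]) auto
  then have "Inf (W X Y) \<le> t" using t by (rule cInf_lower[rotated])
  then show ?thesis using t by (auto simp: infz_def)
qed

lemma D_le_bd: "D X Y \<le> bd X Y" unfolding D_def by simp
lemma D0: "0 \<le> D X Y" unfolding D_def using bd0[of X Y] infz_W0[of X Y] by simp
lemma D_bnd: "bnd D" unfolding bnd_def using D0 D_le_bd bd1 by (meson order_trans)

lemma D_wit: "D (Q (subst g (Mu v e) v)) (Q (subst h (Mu v f) v)) \<le> max (bd (Q g) (Q h)) (bd (Q e) (Q f))"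
proof -
  have "max (bd (Q g) (Q h)) (bd (Q e) (Q f)) \<in> W (Q (subst g (Mu v e) v)) (Q (subst h (Mu v f) v))"
    unfolding W_def by blast
  from infz_W_le[OF this] show ?thesis unfolding D_def by simp
qed


lemma dupD0: "0 \<le> dup D p q" using bndD(1)[OF dup_bnd[OF D_bnd]] .

lemma ONE:
  fixes g h e f :: "'a exp" and v :: nat
  assumes M1: "max (bd (Q g) (Q h)) (bd (Q e) (Q f)) < 1"
  shows "hh (dup D) (beta (Q (subst g (Mu v e) v))) (beta (Q (subst h (Mu v f) v))) \<le> max (bd (Q g) (Q h)) (bd (Q e) (Q f))"
proof -
  define k where "k = Mu v e"
  define l where "l = Mu v f"
  define M where "M = max (bd (Q g) (Q h)) (bd (Q e) (Q f))"
  have M0: "0 \<le> M" unfolding M_def using bd0[of "Q g" "Q h"] by simp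
  have Mlt: "M < 1" using M1 unfolding M_def .
  have Mg: "bd (Q g) (Q h) \<le> M" and Me: "bd (Q e) (Q f) \<le> M" unfolding M_def by simp_all
  have "hh (dup D) (beta (Q (subst g k v))) (beta (Q (subst h l v))) \<le> M"
    unfolding hh_def
  proof (rule supz_le[OF _ M0])
    fix p assume p: "p \<in> beta (Q (subst g k v))"
    show "infz (dup D p ` beta (Q (subst h l v))) \<le> M"
    proof (rule field_le_epsilon)
      fix \<epsilon> :: real assume \<epsilon>: "0 < \<epsilon>"
      define \<eta> where "\<eta> = min \<epsilon> ((1 - M) / 2)"
      have \<eta>0: "0 < \<eta>" unfolding \<eta>_def using \<epsilon> Mlt by simp
      have "\<eta> \<le> (1 - M) / 2" unfolding \<eta>_def by (rule min.cobounded2)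
      then have \<eta>1: "M + \<eta> \<le> 1" using Mlt by (simp add: field_simps)
      have \<eta>\<epsilon>: "\<eta> \<le> \<epsilon>" unfolding \<eta>_def by simp
      have "\<exists>q\<in>beta (Q (subst h l v)). dup D p q \<le> M + \<eta>"
      proof -
        from p have "(\<exists>a x'. p = Inl (a, Q x') \<and> step (subst g k v) a x') \<or> (\<exists>w. p = Inr w \<and> out (subst g k v) w)"
          by (auto simp: beta_abs)
        then show ?thesis
        proof
          assume "\<exists>a x'. p = Inl (a, Q x') \<and> step (subst g k v) a x'"
          then obtain a x' where px: "p = Inl (a, Q x')" "step (subst g k v) a x'" by blast
          from B1[OF px(2)]
          have "(\<exists>g'. step g a g' \<and> db x' [] = db (subst g' k v) []) \<or> (out g v \<and> (\<exists>y. step k a y \<and> db x' [] = db y []))" .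
          then show ?thesis
          proof
            assume "\<exists>g'. step g a g' \<and> db x' [] = db (subst g' k v) []"
            then obtain g' where g': "step g a g'" "db x' [] = db (subst g' k v) []" by blast
            have "bd (Q g) (Q h) < M + \<eta>" using Mg \<eta>0 by simp
            from HL1[OF this \<eta>1 g'(1)] obtain h' where h': "step h a h'" "bd (Q g') (Q h') / 2 < M + \<eta>" by blast
            from B2[OF h'(1), of l v] obtain y where y: "step (subst h l v) a y" "db y [] = db (subst h' l v) []" by blast
            have qin: "Inl (a, Q y) \<in> beta (Q (subst h l v))" using y(1) by (auto simp: beta_abs)
            have "D (Q x') (Q y) = D (Q (subst g' k v)) (Q (subst h' l v))"
              using alpha_abs[OF g'(2)] alpha_abs[OF y(2)] by simp
            also have "\<dots> \<le> max (bd (Q g') (Q h')) (bd (Q e) (Q f))" unfolding k_def l_def by (rule D_wit)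
            finally have "D (Q x') (Q y) / 2 \<le> M + \<eta>" using h'(2) Me M0 \<eta>0 by (simp add: max_def split: if_splits)
            then have "dup D p (Inl (a, Q y)) \<le> M + \<eta>" using px(1) by simp
            then show ?thesis using qin by blast
          next
            assume "out g v \<and> (\<exists>y. step k a y \<and> db x' [] = db y [])"
            then obtain y0 where o: "out g v" "step k a y0" "db x' [] = db y0 []" by blast
            from o(2) obtain e' where e': "y0 = subst e' (Mu v e) v" "step e a e'" unfolding k_def by (rule stepMuE)
            have "bd (Q e) (Q f) < M + \<eta>" using Me \<eta>0 by simp
            from HL1[OF this \<eta>1 e'(2)] obtain f' where f': "step f a f'" "bd (Q e') (Q f') / 2 < M + \<eta>" by blast
            have oh: "out h v" using HL2[of g h v] Mg Mlt o(1) by simp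
            have sl: "step l a (subst f' l v)" unfolding l_def using f'(1) by (rule step.intros(4))
            from B3[OF oh sl] obtain y where y: "step (subst h l v) a y" "db y [] = db (subst f' l v) []" by blast
            have qin: "Inl (a, Q y) \<in> beta (Q (subst h l v))" using y(1) by (auto simp: beta_abs)
            have "D (Q x') (Q y) = D (Q (subst e' k v)) (Q (subst f' l v))"
              using alpha_abs[OF o(3)] alpha_abs[OF y(2)] e'(1) k_def by simp
            also have "\<dots> \<le> max (bd (Q e') (Q f')) (bd (Q e) (Q f))" unfolding k_def l_def by (rule D_wit)
            finally have "D (Q x') (Q y) / 2 \<le> M + \<eta>" using f'(2) Me M0 \<eta>0 by (simp add: max_def split: if_splits)
            then have "dup D p (Inl (a, Q y)) \<le> M + \<eta>" using px(1) by simp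
            then show ?thesis using qin by blast
          qed
        next
          assume "\<exists>w. p = Inr w \<and> out (subst g k v) w"
          then obtain w where pw: "p = Inr w" "out (subst g k v) w" by blast
          have "out (subst h l v) w"
          proof -
            from pw(2) have "(out g w \<and> w \<noteq> v) \<or> (out g v \<and> out k w)" by (simp add: BO)
            then show ?thesis
            proof
              assume a: "out g w \<and> w \<noteq> v"
              have "out h w" using HL2[of g h w] Mg Mlt a by simp
              then show ?thesis using a by (simp add: BO)
            next
              assume a: "out g v \<and> out k w"
              have oh: "out h v" using HL2[of g h v] Mg Mlt a by simp
              have ew: "out e w" "w \<noteq> v" using a unfolding k_def by auto
              have "out f w" using HL2[of e f w] Me Mlt ew(1) by simp
              then have "out l w" unfolding l_def using ew(2) by simp
              then show ?thesis using oh by (simp add: BO)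
            qed
          qed
          then have qin: "Inr w \<in> beta (Q (subst h l v))" by (auto simp: beta_abs)
          have "dup D p (Inr w) \<le> M + \<eta>" using pw(1) M0 \<eta>0 by simp
          then show ?thesis using qin by blast
        qed
      qed
      then obtain q where q: "q \<in> beta (Q (subst h l v))" "dup D p q \<le> M + \<eta>" by blast
      have "infz (dup D p ` beta (Q (subst h l v))) \<le> dup D p q" by (rule infz_le[OF q(1) dupD0])
      then show "infz (dup D p ` beta (Q (subst h l v))) \<le> M + \<epsilon>" using q(2) \<eta>\<epsilon> by simp
    qed
  qed
  then show ?thesis unfolding k_def l_def M_def .
qed


lemma CORE: "Phi D (Q (subst g (Mu v e) v)) (Q (subst h (Mu v f) v)) \<le> max (bd (Q g) (Q h)) (bd (Q e) (Q f))"
proof (cases "max (bd (Q g) (Q h)) (bd (Q e) (Q f)) < 1")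
  case False
  have "Phi D (Q (subst g (Mu v e) v)) (Q (subst h (Mu v f) v)) \<le> 1" using bndD(2)[OF Phi_bnd[OF D_bnd]] .
  moreover have "1 \<le> max (bd (Q g) (Q h)) (bd (Q e) (Q f))" using False by (simp only: not_less)
  ultimately show ?thesis by (rule order_trans)
next
  case True
  have s: "max (bd (Q h) (Q g)) (bd (Q f) (Q e)) = max (bd (Q g) (Q h)) (bd (Q e) (Q f))"
    using bd_sym[of "Q h" "Q g"] bd_sym[of "Q f" "Q e"] by simp
  have 1: "hh (dup D) (beta (Q (subst g (Mu v e) v))) (beta (Q (subst h (Mu v f) v))) \<le> max (bd (Q g) (Q h)) (bd (Q e) (Q f))"
    by (rule ONE[OF True])
  have 2: "hh (dup D) (beta (Q (subst h (Mu v f) v))) (beta (Q (subst g (Mu v e) v))) \<le> max (bd (Q g) (Q h)) (bd (Q e) (Q f))"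
    using ONE[of h g f e v] True s by simp
  show ?thesis unfolding Phi_def hausdorff_hh using 1 2 by simp
qed

lemma PhiD: "Phi D X Y \<le> D X Y"
proof -
  have a: "Phi D X Y \<le> bd X Y"
    using Phi_mono[OF D_bnd bd_bnd D_le_bd, of X Y] bd_fix_pt[of X Y] by simp
  have b: "Phi D X Y \<le> infz (W X Y)"
  proof (cases "W X Y = {}")
    case True
    then show ?thesis using bndD(2)[OF Phi_bnd[OF D_bnd], of X Y] by (simp add: infz_def)
  next
    case False
    have "Phi D X Y \<le> Inf (W X Y)"
    proof (rule cInf_greatest[OF False])
      fix t assume "t \<in> W X Y"
      then obtain g h e f v where t: "t = max (bd (Q g) (Q h)) (bd (Q e) (Q f))"
        "X = Q (subst g (Mu v e) v)" "Y = Q (subst h (Mu v f) v)" unfolding W_def by blast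
      show "Phi D X Y \<le> t" unfolding t using CORE[of g v e h f] by simp
    qed
    then show ?thesis using False by (simp add: infz_def)
  qed
  have "D X Y = min (bd X Y) (infz (W X Y))" by (simp add: D_def)
  then show ?thesis using a b by simp
qed

lemma bd_le_D: "bd X Y \<le> D X Y"
proof (rule cmp[OF bd_bnd D_bnd])
  fix x y show "bd x y \<le> Phi bd x y" by (simp add: bd_fix_pt)
  show "Phi D x y \<le> D x y" by (rule PhiD)
qed

theorem mainTheorem14:
  fixes e f :: "'a exp" and vx :: nat
  shows "bd (abs_qexp (Mu vx e)) (abs_qexp (Mu vx f)) \<le> bd (abs_qexp e) (abs_qexp f)"
proof -
  have s1: "subst (Var vx) (Mu vx e) vx = Mu vx e" and s2: "subst (Var vx) (Mu vx f) vx = Mu vx f" by simp_all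
  have "bd (Q (Mu vx e)) (Q (Mu vx f)) \<le> D (Q (Mu vx e)) (Q (Mu vx f))" by (rule bd_le_D)
  also have "\<dots> \<le> max (bd (Q (Var vx :: 'a exp)) (Q (Var vx))) (bd (Q e) (Q f))"
    using D_wit[of "Var vx" vx e "Var vx" f] unfolding s1 s2 .
  also have "\<dots> = bd (Q e) (Q f)" using bd_zero[of "Q (Var vx :: 'a exp)"] bd0[of "Q e" "Q f"] by simp
  finally show ?thesis .
qed


end
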